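(* Let $(G,w)$ be a finite connected positively weighted graph whose minimum degree is at least $2$. Then for every natural number $r\ge 1$ and every function $g\colon V(G)\to\mathbb{R}^+$, there exists a vertex $v$ of $G$ such that $$\lambda_1(\widetilde{G}(v,r),w)\ \ge\ \frac{2\sum_{v_1\in V(G)}\sqrt{d(v_1)-1}\sum_{v_2\in N(v_1)} w(v_1v_2)\sqrt{g(v_1)g(v_2)}}{\sum_{u\in V(G)} g(u)d(u)}\cos\left(\frac{\pi}{r+2}\right),$$ where $N(v_1)=\{u\in V(G): v_1u\in E(G)\}$.
   Context: A (positively) weighted graph $(G,w)$ is a simple graph $G$ with a weight function $w\colon E(G)\to\mathbb{R}^+$. $d(u)$ denotes the degree (number of incident edges) of $u$ in $G$. A non-backtracking walk is a walk $(v_0,v_1,\dots)$ with $v_i\neq v_{i+2}$ for all $i$ (walks of length at most $1$ are non-backtracking). The unraveled ball $\widetilde{G}(v,r)$ is the graph whose vertices are all non-backtracking walks in $G$ of length at most $r$ starting at $v$, two walks being adjacent iff one is a one-step extension of the other; it is given the lifted weight $w\big((v_0,\dots,v_{i-1})(v_0,\dots,v_{i-1},v_i)\big)=w(v_{i-1}v_i)$. (Equivalently, it is the ball of radius $r$ about $v$ in the universal cover of $G$.) For a weighted graph $(H,w)$, its adjacency matrix $A(H,w)$ has $(u,v)$-entry $w(uv)$ if $uv\in E(H)$ and $0$ otherwise, and $\lambda_1(H,w)$ denotes the spectral radius of $A(H,w)$ (the weighted spectral radius). *)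

theory Defs
  imports Complex_Main
begin

definition weighted_graph :: "'a set \<Rightarrow> ('a \<Rightarrow> 'a \<Rightarrow> bool) \<Rightarrow> ('a \<Rightarrow> 'a \<Rightarrow> real) \<Rightarrow> bool" where
  "weighted_graph V E w \<longleftrightarrow> finite V
     \<and> (\<forall>u v. E u v \<longrightarrow> u \<in> V \<and> v \<in> V)
     \<and> (\<forall>u v. E u v \<longrightarrow> E v u)
     \<and> (\<forall>u. \<not> E u u)
     \<and> (\<forall>u v. E u v \<longrightarrow> w u v > 0 \<and> w u v = w v u)"

definition connected_graph :: "'a set \<Rightarrow> ('a \<Rightarrow> 'a \<Rightarrow> bool) \<Rightarrow> bool" where
  "connected_graph V E \<longleftrightarrow> V \<noteq> {} \<and> (\<forall>u\<in>V. \<forall>v\<in>V. E\<^sup>*\<^sup>* u v)"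

definition nbhd :: "'a set \<Rightarrow> ('a \<Rightarrow> 'a \<Rightarrow> bool) \<Rightarrow> 'a \<Rightarrow> 'a set" where
  "nbhd V E u = {v \<in> V. E u v}"

definition deg :: "'a set \<Rightarrow> ('a \<Rightarrow> 'a \<Rightarrow> bool) \<Rightarrow> 'a \<Rightarrow> nat" where
  "deg V E u = card (nbhd V E u)"

definition nb_walk :: "('a \<Rightarrow> 'a \<Rightarrow> bool) \<Rightarrow> 'a list \<Rightarrow> bool" where
  "nb_walk E xs \<longleftrightarrow> xs \<noteq> []
     \<and> (\<forall>i. Suc i < length xs \<longrightarrow> E (xs ! i) (xs ! Suc i))
     \<and> (\<forall>i. i + 2 < length xs \<longrightarrow> xs ! i \<noteq> xs ! (i + 2))"

text \<open>Vertices of the unraveled ball: non-backtracking walks from v of length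
(number of edges) at most r.\<close>
definition unr_verts :: "('a \<Rightarrow> 'a \<Rightarrow> bool) \<Rightarrow> 'a \<Rightarrow> nat \<Rightarrow> 'a list set" where
  "unr_verts E v r = {xs. nb_walk E xs \<and> hd xs = v \<and> length xs \<le> r + 1}"

text \<open>Lifted weighted adjacency of the unraveled ball: two walks are adjacent iff
one is a one-step extension of the other; the weight is that of the last edge.\<close>
definition unr_adj :: "('a \<Rightarrow> 'a \<Rightarrow> real) \<Rightarrow> 'a list \<Rightarrow> 'a list \<Rightarrow> real" where
  "unr_adj w xs ys =
     (if (\<exists>z. ys = xs @ [z]) then w (last xs) (last ys)
      else if (\<exists>z. xs = ys @ [z]) then w (last ys) (last xs)
      else 0)"

definition spec_radius :: "'b set \<Rightarrow> ('b \<Rightarrow> 'b \<Rightarrow> real) \<Rightarrow> real" where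
  "spec_radius S A = Sup {cmod \<mu> | \<mu>. \<exists>x :: 'b \<Rightarrow> complex. (\<exists>u\<in>S. x u \<noteq> 0)
       \<and> (\<forall>u\<in>S. (\<Sum>v\<in>S. complex_of_real (A u v) * x v) = \<mu> * x u)}"

definition lambda1_unr :: "('a \<Rightarrow> 'a \<Rightarrow> bool) \<Rightarrow> ('a \<Rightarrow> 'a \<Rightarrow> real) \<Rightarrow> 'a \<Rightarrow> nat \<Rightarrow> real" where
  "lambda1_unr E w v r = spec_radius (unr_verts E v r) (unr_adj w)"

end

theory Submission
  imports Defs "Jordan_Normal_Form.Spectral_Radius"
begin


definition is_eig :: "'b set \<Rightarrow> ('b \<Rightarrow> 'b \<Rightarrow> real) \<Rightarrow> complex \<Rightarrow> bool" where
  "is_eig S A \<mu> \<longleftrightarrow> (\<exists>x :: 'b \<Rightarrow> complex. (\<exists>u\<in>S. x u \<noteq> 0)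
       \<and> (\<forall>u\<in>S. (\<Sum>v\<in>S. complex_of_real (A u v) * x v) = \<mu> * x u))"

lemma spec_radius_eq: "spec_radius S A = Sup {cmod \<mu> | \<mu>. is_eig S A \<mu>}"
  unfolding spec_radius_def is_eig_def by simp

lemma is_eig_bound:
  assumes S: "finite S" and ev: "is_eig S A \<mu>"
  shows "cmod \<mu> \<le> (\<Sum>u\<in>S. \<Sum>v\<in>S. \<bar>A u v\<bar>)"
proof -
  obtain x where nz: "\<exists>u\<in>S. x u \<noteq> 0" and eq: "\<forall>u\<in>S. (\<Sum>v\<in>S. complex_of_real (A u v) * x v) = \<mu> * x u"
    using ev unfolding is_eig_def by blast
  have ne: "S \<noteq> {}" using nz by blast
  have "Max ((\<lambda>u. cmod (x u)) ` S) \<in> (\<lambda>u. cmod (x u)) ` S" using S ne by simp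
  then obtain u0 where u0': "u0 \<in> S" "cmod (x u0) = Max ((\<lambda>u. cmod (x u)) ` S)" by auto
  have u0: "u0 \<in> S" "\<forall>u\<in>S. cmod (x u) \<le> cmod (x u0)" using u0' S by auto
  have pos: "cmod (x u0) > 0" using nz u0 by force
  have "cmod \<mu> * cmod (x u0) = cmod (\<Sum>v\<in>S. complex_of_real (A u0 v) * x v)"
    using eq u0(1) by (simp add: norm_mult)
  also have "\<dots> \<le> (\<Sum>v\<in>S. cmod (complex_of_real (A u0 v) * x v))" by (rule norm_sum)
  also have "\<dots> \<le> (\<Sum>v\<in>S. \<bar>A u0 v\<bar> * cmod (x u0))"
    by (rule sum_mono) (simp add: norm_mult mult_left_mono u0(2))
  also have "\<dots> = (\<Sum>v\<in>S. \<bar>A u0 v\<bar>) * cmod (x u0)" by (simp add: sum_distrib_right)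
  finally have "cmod \<mu> \<le> (\<Sum>v\<in>S. \<bar>A u0 v\<bar>)" using pos by simp
  also have "\<dots> \<le> (\<Sum>u\<in>S. \<Sum>v\<in>S. \<bar>A u v\<bar>)"
    using member_le_sum[of u0 S "\<lambda>u. \<Sum>v\<in>S. \<bar>A u v\<bar>"] u0(1) S by (simp add: sum_nonneg)
  finally show ?thesis .
qed

lemma bdd_eig: "finite S \<Longrightarrow> bdd_above {cmod \<mu> | \<mu>. is_eig S A \<mu>}"
  using is_eig_bound by (auto intro!: bdd_aboveI)

lemma le_spec_radius: "finite S \<Longrightarrow> is_eig S A \<mu> \<Longrightarrow> cmod \<mu> \<le> spec_radius S A"
  unfolding spec_radius_eq by (rule cSup_upper) (auto intro: bdd_eig)

fun Apow :: "'b set \<Rightarrow> ('b \<Rightarrow> 'b \<Rightarrow> real) \<Rightarrow> nat \<Rightarrow> 'b \<Rightarrow> 'b \<Rightarrow> real" where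
  "Apow S A 0 u v = (if u = v then 1 else 0)"
| "Apow S A (Suc k) u v = (\<Sum>w\<in>S. Apow S A k u w * A w v)"

locale enum_setup =
  fixes S :: "'b set" and A :: "'b \<Rightarrow> 'b \<Rightarrow> real" and e :: "nat \<Rightarrow> 'b" and n :: nat
  assumes fin: "finite S" and bij: "bij_betw e {0..<n} S"
begin

definition M :: "complex mat" where
  "M = mat n n (\<lambda>(i,j). complex_of_real (A (e i) (e j)))"

lemma M_carrier: "M \<in> carrier_mat n n" unfolding M_def by simp

lemma sum_reindex: "(\<Sum>v\<in>S. h v) = (\<Sum>j\<in>{0..<n}. h (e j))"
  using sum.reindex_bij_betw[OF bij, of h] by simp

lemma e_in: "j < n \<Longrightarrow> e j \<in> S" using bij by (auto simp: bij_betw_def)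

lemma e_inj: "i < n \<Longrightarrow> j < n \<Longrightarrow> e i = e j \<longleftrightarrow> i = j"
  using bij by (auto simp: bij_betw_def inj_on_def)

lemma pow_M: "i < n \<Longrightarrow> j < n \<Longrightarrow> (M ^\<^sub>m k) $$ (i,j) = complex_of_real (Apow S A k (e i) (e j))"
proof (induction k arbitrary: i j)
  case 0
  then show ?case using M_carrier by (simp add: e_inj)
next
  case (Suc k)
  have "(M ^\<^sub>m Suc k) $$ (i,j) = row (M ^\<^sub>m k) i \<bullet> col M j"
    using Suc.prems M_carrier by simp
  also have "\<dots> = (\<Sum>l\<in>{0..<n}. (M ^\<^sub>m k) $$ (i,l) * M $$ (l,j))"
    using Suc.prems M_carrier by (simp add: scalar_prod_def)
  also have "\<dots> = (\<Sum>l\<in>{0..<n}. complex_of_real (Apow S A k (e i) (e l) * A (e l) (e j)))"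
    using Suc by (intro sum.cong) (auto simp: M_def)
  also have "\<dots> = complex_of_real (\<Sum>l\<in>{0..<n}. Apow S A k (e i) (e l) * A (e l) (e j))"
    by simp
  also have "\<dots> = complex_of_real (Apow S A (Suc k) (e i) (e j))"
    by (simp add: sum_reindex[of "\<lambda>w. Apow S A k (e i) w * A w (e j)"])
  finally show ?case .
qed

lemma eig_M: assumes "eigenvalue M \<mu>" shows "is_eig S A \<mu>"
proof -
  obtain v where v: "v \<in> carrier_vec n" "v \<noteq> 0\<^sub>v n" "M *\<^sub>v v = \<mu> \<cdot>\<^sub>v v"
    using assms M_carrier unfolding eigenvalue_def eigenvector_def by auto
  define x where "x u = v $ (the_inv_into {0..<n} e u)" for u
  have xe: "x (e j) = v $ j" if "j < n" for j
    unfolding x_def using the_inv_into_f_f[OF bij_betw_imp_inj_on[OF bij]] that by simp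
  obtain i where i: "i < n" "v $ i \<noteq> 0"
    using v(1,2) by (metis carrier_vecD eq_vecI index_zero_vec(1) index_zero_vec(2))
  have "\<exists>u\<in>S. x u \<noteq> 0" using i xe e_in by metis
  moreover have "\<forall>u\<in>S. (\<Sum>w\<in>S. complex_of_real (A u w) * x w) = \<mu> * x u"
  proof
    fix u assume "u \<in> S"
    then obtain i where i: "i < n" "u = e i" using bij by (auto simp: bij_betw_def image_iff)
    have "(\<Sum>w\<in>S. complex_of_real (A u w) * x w) = (\<Sum>j\<in>{0..<n}. M $$ (i,j) * v $ j)"
      unfolding sum_reindex using i xe by (intro sum.cong) (auto simp: M_def)
    also have "\<dots> = (M *\<^sub>v v) $ i" using i v(1) M_carrier by (simp add: scalar_prod_def)
    also have "\<dots> = \<mu> * x u" using v(1,3) i xe by simp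
    finally show "(\<Sum>w\<in>S. complex_of_real (A u w) * x w) = \<mu> * x u" .
  qed
  ultimately show ?thesis unfolding is_eig_def by blast
qed

end

lemma enum_exists: "finite S \<Longrightarrow> \<exists>e. enum_setup S e (card S)"
  using ex_bij_betw_nat_finite unfolding enum_setup_def by blast

lemma eig_exists: assumes "finite S" "S \<noteq> {}" shows "\<exists>\<mu>. is_eig S A \<mu>"
proof -
  obtain e where es: "enum_setup S e (card S)" using enum_exists[OF assms(1)] by blast
  interpret enum_setup S A e "card S" by fact
  have "card S > 0" using assms by auto
  from spectrum_non_empty[OF M_carrier this] obtain \<mu> where "eigenvalue M \<mu>"
    unfolding spectrum_def by auto
  thus ?thesis using eig_M by blast
qed

lemma core_bound:
  assumes fin: "finite S" and small: "\<forall>\<mu>. is_eig S A \<mu> \<longrightarrow> cmod \<mu> < 1"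
  shows "\<exists>C. \<forall>k. \<forall>u\<in>S. \<forall>v\<in>S. \<bar>Apow S A k u v\<bar> \<le> C"
proof (cases "S = {}")
  case True then show ?thesis by auto
next
  case False
  obtain e where es: "enum_setup S e (card S)" using enum_exists[OF fin] by blast
  interpret enum_setup S A e "card S" by fact
  have n: "card S > 0" using False fin by auto
  have "spectral_radius M \<in> norm ` spectrum M" by (rule spectral_radius_mem_max(1)[OF M_carrier n])
  then obtain \<mu> where "eigenvalue M \<mu>" "spectral_radius M = cmod \<mu>" unfolding spectrum_def by auto
  with eig_M small have "spectral_radius M < 1" by auto
  from spectral_radius_jnf_norm_bound_less_1_upper_triangular[OF M_carrier this]
  obtain C where C: "\<forall>k. norm_bound (M ^\<^sub>m k) C" by blast
  show ?thesis
  proof (intro exI allI ballI)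
    fix k u v assume u: "u \<in> S" and v: "v \<in> S"
    obtain i where i: "i < card S" "u = e i" using bij u unfolding bij_betw_def by (metis atLeastLessThan_iff imageE)
    obtain j where j: "j < card S" "v = e j" using bij v unfolding bij_betw_def by (metis atLeastLessThan_iff imageE)
    have "norm ((M ^\<^sub>m k) $$ (i,j)) \<le> C" using C i j M_carrier unfolding norm_bound_def by auto
    thus "\<bar>Apow S A k u v\<bar> \<le> C" using pow_M[OF i(1) j(1)] i j by simp
  qed
qed


definition mv :: "'b set \<Rightarrow> ('b \<Rightarrow> 'b \<Rightarrow> real) \<Rightarrow> ('b \<Rightarrow> real) \<Rightarrow> 'b \<Rightarrow> real" where
  "mv S A g = (\<lambda>u. \<Sum>v\<in>S. A u v * g v)"

definition ip :: "'b set \<Rightarrow> ('b \<Rightarrow> real) \<Rightarrow> ('b \<Rightarrow> real) \<Rightarrow> real" where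
  "ip S f g = (\<Sum>u\<in>S. f u * g u)"

lemma Apow_mv:
  assumes fin: "finite S" and u: "u \<in> S"
  shows "(\<Sum>v\<in>S. Apow S A k u v * g v) = (mv S A ^^ k) g u"
proof (induction k arbitrary: g)
  case 0
  have "(\<Sum>v\<in>S. (if u = v then 1 else 0) * g v) = (\<Sum>v\<in>S. if u = v then g v else 0)"
    by (intro sum.cong) auto
  also have "\<dots> = g u" using fin u by (simp add: sum.delta)
  finally have "(\<Sum>v\<in>S. (if u = v then 1 else 0) * g v) = g u" .
  then show ?case by simp
next
  case (Suc k)
  have "(\<Sum>v\<in>S. Apow S A (Suc k) u v * g v) = (\<Sum>v\<in>S. \<Sum>w\<in>S. Apow S A k u w * (A w v * g v))"
    by (simp add: sum_distrib_right mult.assoc)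
  also have "\<dots> = (\<Sum>w\<in>S. Apow S A k u w * mv S A g w)"
    by (subst sum.swap) (simp add: mv_def sum_distrib_left)
  also have "\<dots> = (mv S A ^^ k) (mv S A g) u" by (rule Suc.IH)
  also have "\<dots> = (mv S A ^^ Suc k) g u" by (simp only: funpow_Suc_right o_apply)
  finally show ?case .
qed

lemma ip_sym_mv:
  assumes sym: "\<forall>u\<in>S. \<forall>v\<in>S. A u v = A v u"
  shows "ip S (mv S A g) h = ip S g (mv S A h)"
proof -
  have "ip S (mv S A g) h = (\<Sum>u\<in>S. \<Sum>v\<in>S. A u v * g v * h u)"
    by (simp add: ip_def mv_def sum_distrib_right)
  also have "\<dots> = (\<Sum>v\<in>S. \<Sum>u\<in>S. A u v * g v * h u)" by (rule sum.swap)
  also have "\<dots> = (\<Sum>v\<in>S. \<Sum>u\<in>S. g v * (A v u * h u))"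
    using sym by (intro sum.cong refl) (simp add: mult_ac)
  also have "\<dots> = ip S g (mv S A h)" by (simp add: ip_def mv_def sum_distrib_left)
  finally show ?thesis .
qed

lemma ip_pow:
  assumes sym: "\<forall>u\<in>S. \<forall>v\<in>S. A u v = A v u"
  shows "ip S ((mv S A ^^ j) f) ((mv S A ^^ k) f) = ip S f ((mv S A ^^ (j + k)) f)"
proof (induction j arbitrary: k)
  case 0 then show ?case by simp
next
  case (Suc j)
  have "ip S ((mv S A ^^ Suc j) f) ((mv S A ^^ k) f) = ip S ((mv S A ^^ j) f) ((mv S A ^^ Suc k) f)"
    using ip_sym_mv[OF sym] by simp
  also have "\<dots> = ip S f ((mv S A ^^ (j + Suc k)) f)" by (rule Suc.IH)
  finally show ?case by simp
qed

lemma cs_ip: "(ip S f g)^2 \<le> ip S f f * ip S g g"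
proof -
  have e1: "(\<Sum>i\<in>S. \<Sum>j\<in>S. (f i)^2 * (g j)^2) = ip S f f * ip S g g"
    by (simp add: ip_def sum_product power2_eq_square)
  have e2: "(\<Sum>i\<in>S. \<Sum>j\<in>S. (f j)^2 * (g i)^2) = ip S f f * ip S g g"
    by (subst sum.swap) (rule e1)
  have e3: "(\<Sum>i\<in>S. \<Sum>j\<in>S. (f i * g i) * (f j * g j)) = (ip S f g)^2"
    by (simp add: ip_def sum_product power2_eq_square)
  have "0 \<le> (\<Sum>i\<in>S. \<Sum>j\<in>S. (f i * g j - f j * g i)^2)" by (intro sum_nonneg) auto
  also have "\<dots> = (\<Sum>i\<in>S. \<Sum>j\<in>S. ((f i)^2 * (g j)^2 + (f j)^2 * (g i)^2) - 2 * ((f i * g i) * (f j * g j)))"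
    by (intro sum.cong refl) (simp add: power2_eq_square algebra_simps)
  also have "\<dots> = ((\<Sum>i\<in>S. \<Sum>j\<in>S. (f i)^2 * (g j)^2) + (\<Sum>i\<in>S. \<Sum>j\<in>S. (f j)^2 * (g i)^2))
        - 2 * (\<Sum>i\<in>S. \<Sum>j\<in>S. (f i * g i) * (f j * g j))"
    by (simp add: sum_subtractf sum.distrib sum_distrib_left)
  also have "\<dots> = 2 * (ip S f f * ip S g g) - 2 * (ip S f g)^2"
    unfolding e1 e2 e3 by simp
  finally show ?thesis by simp
qed

lemma growth_false:
  assumes fin: "finite S" and sym: "\<forall>u\<in>S. \<forall>v\<in>S. A u v = A v u"
    and pos: "ip S f f > 0" and big: "ip S f (mv S A f) > ip S f f"
    and small: "\<forall>\<mu>. is_eig S A \<mu> \<longrightarrow> cmod \<mu> < 1"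
  shows False
proof -
  obtain C where C: "\<forall>k. \<forall>u\<in>S. \<forall>v\<in>S. \<bar>Apow S A k u v\<bar> \<le> C"
    using core_bound[OF fin small] by blast
  define F where "F k = (mv S A ^^ k) f" for k
  define b where "b m = ip S f (F (2^m))" for m
  define \<rho> where "\<rho> = ip S f (mv S A f) / ip S f f"
  have rho: "\<rho> > 1" using big pos by (simp add: \<rho>_def)
  have bl: "b m \<ge> \<rho>^(2^m) * ip S f f" for m
  proof (induction m)
    case 0
    have "b 0 = ip S f (mv S A f)" by (simp add: b_def F_def)
    moreover have "\<rho>^(2^0) * ip S f f = ip S f (mv S A f)" using pos by (simp add: \<rho>_def)
    ultimately show ?case by simp
  next
    case (Suc m)
    have "0 \<le> \<rho>^(2^m) * ip S f f" using rho pos by (intro mult_nonneg_nonneg zero_le_power) auto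
    hence b0: "b m \<ge> 0" using Suc by linarith
    have "b (Suc m) = ip S f (F (2^m + 2^m))" by (simp add: b_def mult_2)
    also have "\<dots> = ip S (F (2^m)) (F (2^m))"
      unfolding F_def by (rule ip_pow[OF sym, symmetric])
    finally have "b (Suc m) = ip S (F (2^m)) (F (2^m))" .
    moreover have "(b m)^2 \<le> ip S f f * ip S (F (2^m)) (F (2^m))"
      unfolding b_def by (rule cs_ip)
    moreover have "(\<rho>^(2^m) * ip S f f)^2 \<le> (b m)^2"
      using Suc b0 rho pos by (intro power_mono) auto
    ultimately have ineq: "(\<rho>^(2^m) * ip S f f)^2 \<le> ip S f f * b (Suc m)"
      by (metis order_trans)
    have e1: "\<rho>^(2^Suc m) = \<rho>^(2^m * 2)" by (simp add: mult.commute)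
    also have "\<dots> = (\<rho>^(2^m))^2" by (rule power_mult)
    finally have e2: "(\<rho>^(2^m) * ip S f f)^2 = \<rho>^(2^Suc m) * ip S f f * ip S f f"
      by (simp add: power2_eq_square)
    have "\<rho>^(2^Suc m) * ip S f f * ip S f f \<le> b (Suc m) * ip S f f"
      using ineq unfolding e2 by (simp add: mult.commute)
    thus ?case using pos by simp
  qed
  define K where "K = C * (\<Sum>u\<in>S. \<bar>f u\<bar>)^2"
  have bu: "b m \<le> K" for m
  proof -
    have "b m = (\<Sum>u\<in>S. f u * (\<Sum>v\<in>S. Apow S A (2^m) u v * f v))"
      unfolding b_def ip_def F_def using Apow_mv[OF fin] by (intro sum.cong) auto
    also have "\<dots> \<le> (\<Sum>u\<in>S. \<Sum>v\<in>S. \<bar>f u\<bar> * C * \<bar>f v\<bar>)"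
    proof (intro sum_mono)
      fix u assume u: "u \<in> S"
      have "f u * (\<Sum>v\<in>S. Apow S A (2^m) u v * f v) = (\<Sum>v\<in>S. f u * Apow S A (2^m) u v * f v)"
        by (simp add: sum_distrib_left mult.assoc)
      also have "\<dots> \<le> (\<Sum>v\<in>S. \<bar>f u\<bar> * C * \<bar>f v\<bar>)"
      proof (intro sum_mono)
        fix v assume v: "v \<in> S"
        have "f u * Apow S A (2^m) u v * f v \<le> \<bar>f u * Apow S A (2^m) u v * f v\<bar>" by simp
        also have "\<dots> = \<bar>f u\<bar> * \<bar>Apow S A (2^m) u v\<bar> * \<bar>f v\<bar>" by (simp add: abs_mult)
        also have "\<dots> \<le> \<bar>f u\<bar> * C * \<bar>f v\<bar>"
          using C u v by (intro mult_right_mono mult_left_mono) auto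
        finally show "f u * Apow S A (2^m) u v * f v \<le> \<bar>f u\<bar> * C * \<bar>f v\<bar>" .
      qed
      finally show "f u * (\<Sum>v\<in>S. Apow S A (2^m) u v * f v) \<le> (\<Sum>v\<in>S. \<bar>f u\<bar> * C * \<bar>f v\<bar>)" .
    qed
    also have "\<dots> = K" by (simp add: K_def power2_eq_square sum_distrib_left sum_distrib_right mult_ac)
    finally show ?thesis .
  qed
  obtain m where m: "K / ip S f f < \<rho>^m" using real_arch_pow[OF rho] by blast
  have pm: "\<rho>^m \<le> \<rho>^(2^m)" using rho by (intro power_increasing) (auto intro: less_imp_le)
  have "K < \<rho>^m * ip S f f" using m pos by (simp add: divide_less_eq)
  also have "\<dots> \<le> \<rho>^(2^m) * ip S f f" using pm pos by (simp add: mult_right_mono)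
  finally have "K < \<rho>^(2^m) * ip S f f" .
  with bl[of m] bu[of m] show False by linarith
qed

lemma rayleigh:
  assumes fin: "finite S" and sym: "\<forall>u\<in>S. \<forall>v\<in>S. A u v = A v u" and pos: "ip S f f > 0"
  shows "ip S f (mv S A f) / ip S f f \<le> spec_radius S A"
proof (rule ccontr)
  define q where "q = ip S f (mv S A f) / ip S f f"
  define sr where "sr = spec_radius S A"
  assume "\<not> ip S f (mv S A f) / ip S f f \<le> spec_radius S A"
  hence lt: "sr < q" by (simp add: q_def sr_def)
  have ne: "S \<noteq> {}" using pos by (auto simp: ip_def)
  obtain \<mu>0 where "is_eig S A \<mu>0" using eig_exists[OF fin ne] by blast
  hence sr0: "sr \<ge> 0" using le_spec_radius[OF fin] unfolding sr_def by (meson norm_ge_zero order_trans)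
  define q' where "q' = (sr + q) / 2"
  have q'pos: "q' > 0" "sr < q'" "q' < q" using lt sr0 by (auto simp: q'_def)
  define A' where "A' = (\<lambda>u v. A u v / q')"
  have sym': "\<forall>u\<in>S. \<forall>v\<in>S. A' u v = A' v u" using sym by (simp add: A'_def)
  have mvA': "mv S A' f = (\<lambda>u. mv S A f u / q')"
    by (simp add: mv_def A'_def sum_divide_distrib)
  have "ip S f (mv S A' f) = ip S f (mv S A f) / q'"
    by (simp add: mvA' ip_def sum_divide_distrib)
  also have "\<dots> = q * ip S f f / q'" using pos by (simp add: q_def)
  also have "\<dots> > ip S f f" using q'pos pos by (simp add: divide_simps)
  finally have big: "ip S f (mv S A' f) > ip S f f" .
  have small: "\<forall>\<mu>. is_eig S A' \<mu> \<longrightarrow> cmod \<mu> < 1"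
  proof (intro allI impI)
    fix \<mu> assume "is_eig S A' \<mu>"
    then obtain x where x: "\<exists>u\<in>S. x u \<noteq> 0" "\<forall>u\<in>S. (\<Sum>v\<in>S. complex_of_real (A' u v) * x v) = \<mu> * x u"
      unfolding is_eig_def by blast
    have "\<forall>u\<in>S. (\<Sum>v\<in>S. complex_of_real (A u v) * x v) = (complex_of_real q' * \<mu>) * x u"
    proof
      fix u assume u: "u \<in> S"
      have "(\<Sum>v\<in>S. complex_of_real (A u v) * x v) = complex_of_real q' * (\<Sum>v\<in>S. complex_of_real (A' u v) * x v)"
        using q'pos by (simp add: A'_def sum_distrib_left)
      also have "\<dots> = (complex_of_real q' * \<mu>) * x u" using x(2) u by simp
      finally show "(\<Sum>v\<in>S. complex_of_real (A u v) * x v) = (complex_of_real q' * \<mu>) * x u" .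
    qed
    hence "is_eig S A (complex_of_real q' * \<mu>)" using x(1) unfolding is_eig_def by blast
    hence "cmod (complex_of_real q' * \<mu>) \<le> sr" using le_spec_radius[OF fin] sr_def by blast
    hence "q' * cmod \<mu> \<le> sr" using q'pos by (simp add: norm_mult)
    hence "q' * cmod \<mu> < q' * 1" using q'pos by linarith
    thus "cmod \<mu> < 1" using q'pos by (metis mult_less_cancel_left_pos)
  qed
  show False by (rule growth_false[OF fin sym' pos big small])
qed



lemma nb_walk_single[simp]: "nb_walk E [v]"
  by (simp add: nb_walk_def)

lemma nb_walk_snoc:
  assumes "W \<noteq> []"
  shows "nb_walk E (W @ [z]) \<longleftrightarrow> nb_walk E W \<and> E (last W) z \<and> (2 \<le> length W \<longrightarrow> z \<noteq> last (butlast W))"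
proof -
  let ?n = "length W"
  have n: "?n \<ge> 1" using assms by (cases W) auto
  have lastW: "last W = W ! (?n - 1)" using assms by (simp add: last_conv_nth)
  have lbW: "last (butlast W) = W ! (?n - 2)" if h: "2 \<le> ?n"
  proof -
    have "length (butlast W) \<ge> 1" using h by simp
    hence bne: "butlast W \<noteq> []" by (metis length_0_conv not_one_le_zero)
    have "last (butlast W) = butlast W ! (length (butlast W) - 1)" by (rule last_conv_nth[OF bne])
    also have "\<dots> = W ! (?n - 2)" using h by (simp add: nth_butlast numeral_2_eq_2)
    finally show ?thesis .
  qed
  show ?thesis
  proof
    assume H: "nb_walk E (W @ [z])"
    have e: "\<And>i. Suc i < Suc ?n \<Longrightarrow> E ((W@[z]) ! i) ((W@[z]) ! Suc i)"
      and nb: "\<And>i. i + 2 < Suc ?n \<Longrightarrow> (W@[z]) ! i \<noteq> (W@[z]) ! (i + 2)"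
      using H unfolding nb_walk_def by auto
    have "nb_walk E W" unfolding nb_walk_def
    proof (intro conjI allI impI)
      show "W \<noteq> []" by fact
      fix i assume "Suc i < ?n"
      thus "E (W ! i) (W ! Suc i)" using e[of i] by (simp add: nth_append)
    next
      fix i assume "i + 2 < ?n"
      thus "W ! i \<noteq> W ! (i + 2)" using nb[of i] by (simp add: nth_append)
    qed
    moreover have "E (last W) z"
    proof -
      have s: "Suc (?n - 1) = ?n" using n by simp
      have "E ((W@[z]) ! (?n - 1)) ((W@[z]) ! ?n)" using e[of "?n - 1"] s by simp
      moreover have lt: "?n - 1 < ?n" using n by simp
      ultimately show ?thesis using lastW by (simp add: nth_append)
    qed
    moreover have "2 \<le> ?n \<longrightarrow> z \<noteq> last (butlast W)"
    proof
      assume "2 \<le> ?n"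
      hence s: "?n - 2 + 2 = ?n" "?n - 2 < ?n" by auto
      have "(W@[z]) ! (?n - 2) \<noteq> (W@[z]) ! (?n - 2 + 2)" using nb[of "?n - 2"] s by simp
      hence "W ! (?n - 2) \<noteq> z" using s by (simp add: nth_append)
      with lbW \<open>2 \<le> ?n\<close> show "z \<noteq> last (butlast W)" by simp
    qed
    ultimately show "nb_walk E W \<and> E (last W) z \<and> (2 \<le> ?n \<longrightarrow> z \<noteq> last (butlast W))" by blast
  next
    assume H: "nb_walk E W \<and> E (last W) z \<and> (2 \<le> ?n \<longrightarrow> z \<noteq> last (butlast W))"
    have e: "\<And>i. Suc i < ?n \<Longrightarrow> E (W ! i) (W ! Suc i)"
      and nb: "\<And>i. i + 2 < ?n \<Longrightarrow> W ! i \<noteq> W ! (i + 2)"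
      using H unfolding nb_walk_def by auto
    show "nb_walk E (W @ [z])" unfolding nb_walk_def
    proof (intro conjI allI impI)
      show "W @ [z] \<noteq> []" by simp
      fix i assume i: "Suc i < length (W @ [z])"
      show "E ((W @ [z]) ! i) ((W @ [z]) ! Suc i)"
      proof (cases "Suc i < ?n")
        case True then show ?thesis using e[of i] by (simp add: nth_append)
      next
        case False
        hence ii: "i = ?n - 1" using i by simp
        have a: "(W @ [z]) ! i = last W" using ii lastW n assms by (simp add: nth_append)
        have si: "Suc i = length W" using ii n by linarith
        have b: "(W @ [z]) ! Suc i = z" unfolding si by simp
        show ?thesis using H a b by simp
      qed
    next
      fix i assume i: "i + 2 < length (W @ [z])"
      show "(W @ [z]) ! i \<noteq> (W @ [z]) ! (i + 2)"
      proof (cases "i + 2 < ?n")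
        case True then show ?thesis using nb[of i] by (simp add: nth_append)
      next
        case False
        hence ii: "i + 2 = ?n" "i < ?n" "2 \<le> ?n" using i by auto
        have "W ! i \<noteq> z" using H lbW ii by (metis add_diff_cancel_right')
        thus ?thesis using ii by (simp add: nth_append)
      qed
    qed
  qed
qed

definition nbw :: "'a set \<Rightarrow> ('a \<Rightarrow> 'a \<Rightarrow> bool) \<Rightarrow> nat \<Rightarrow> 'a list set" where
  "nbw V E j = {xs. nb_walk E xs \<and> hd xs \<in> V \<and> length xs = Suc j}"

definition ext :: "'a set \<Rightarrow> ('a \<Rightarrow> 'a \<Rightarrow> bool) \<Rightarrow> 'a list \<Rightarrow> 'a set" where
  "ext V E W = nbhd V E (last W) - (if 2 \<le> length W then {last (butlast W)} else {})"

lemma nbw_0: "nbw V E 0 = (\<lambda>v. [v]) ` V"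
  unfolding nbw_def by (auto simp: length_Suc_conv)

context
  fixes V E w
  assumes G: "weighted_graph V E w"
begin

lemma EV: "E u v \<Longrightarrow> u \<in> V \<and> v \<in> V" using G unfolding weighted_graph_def by blast
lemma Esym: "E u v \<Longrightarrow> E v u" using G unfolding weighted_graph_def by blast
lemma finV: "finite V" using G unfolding weighted_graph_def by blast

lemma nbw_Suc: "nbw V E (Suc j) = (\<lambda>(W,z). W @ [z]) ` (SIGMA W:nbw V E j. ext V E W)"
proof
  show "nbw V E (Suc j) \<subseteq> (\<lambda>(W,z). W @ [z]) ` (SIGMA W:nbw V E j. ext V E W)"
  proof
    fix xs assume "xs \<in> nbw V E (Suc j)"
    hence xs: "nb_walk E xs" "hd xs \<in> V" "length xs = Suc (Suc j)" unfolding nbw_def by auto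
    define W where "W = butlast xs"
    define z where "z = last xs"
    have eq: "xs = W @ [z]" unfolding W_def z_def using xs(3)
      by (metis append_butlast_last_id list.size(3) nat.simps(3))
    have Wne: "W \<noteq> []" using xs(3) unfolding W_def by (cases xs) auto
    have "nb_walk E W" "E (last W) z" "2 \<le> length W \<longrightarrow> z \<noteq> last (butlast W)"
      using nb_walk_snoc[OF Wne, of E z] xs(1) eq by auto
    moreover have "hd W = hd xs" using eq Wne by simp
    moreover have "length W = Suc j" using xs(3) unfolding W_def by simp
    ultimately have "W \<in> nbw V E j" "z \<in> ext V E W"
      using xs(2) EV unfolding nbw_def ext_def nbhd_def by auto
    thus "xs \<in> (\<lambda>(W,z). W @ [z]) ` (SIGMA W:nbw V E j. ext V E W)" using eq by force
  qed
next
  show "(\<lambda>(W,z). W @ [z]) ` (SIGMA W:nbw V E j. ext V E W) \<subseteq> nbw V E (Suc j)"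
  proof safe
    fix W z assume W: "W \<in> nbw V E j" and z: "z \<in> ext V E W"
    have Wne: "W \<noteq> []" using W unfolding nbw_def by auto
    have "nb_walk E (W @ [z])"
      using nb_walk_snoc[OF Wne] W z unfolding nbw_def ext_def nbhd_def by (auto split: if_splits)
    thus "W @ [z] \<in> nbw V E (Suc j)" using W Wne unfolding nbw_def by auto
  qed
qed

lemma finite_ext: "finite (ext V E W)"
  using finV unfolding ext_def nbhd_def by auto

lemma finite_nbw: "finite (nbw V E j)"
proof (induction j)
  case 0 then show ?case using finV by (simp add: nbw_0)
next
  case (Suc j) then show ?case using finite_ext by (simp add: nbw_Suc)
qed

lemma sum_nbw_Suc:
  "(\<Sum>x\<in>nbw V E (Suc j). F x) = (\<Sum>W\<in>nbw V E j. \<Sum>z\<in>ext V E W. F (W @ [z]))"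
proof -
  have inj: "inj_on (\<lambda>(W,z). W @ [z]) (SIGMA W:nbw V E j. ext V E W)"
    by (auto simp: inj_on_def)
  have "(\<Sum>x\<in>nbw V E (Suc j). F x) = (\<Sum>p\<in>(SIGMA W:nbw V E j. ext V E W). F ((\<lambda>(W,z). W @ [z]) p))"
    unfolding nbw_Suc by (rule sum.reindex[OF inj, unfolded comp_def])
  also have "\<dots> = (\<Sum>(W,z)\<in>(SIGMA W:nbw V E j. ext V E W). F (W @ [z]))"
    by (intro sum.cong) auto
  also have "\<dots> = (\<Sum>W\<in>nbw V E j. \<Sum>z\<in>ext V E W. F (W @ [z]))"
    by (rule sum.Sigma[symmetric]) (auto simp: finite_nbw finite_ext)
  finally show ?thesis .
qed

lemma sum_nbw_0: "(\<Sum>x\<in>nbw V E 0. F x) = (\<Sum>v\<in>V. F [v])"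
  unfolding nbw_0 by (subst sum.reindex) (auto simp: inj_on_def)

lemma nbw_props: "W \<in> nbw V E j \<Longrightarrow> W \<noteq> [] \<and> length W = Suc j \<and> last W \<in> V"
proof (induction j arbitrary: W)
  case 0 then show ?case by (auto simp: nbw_0)
next
  case (Suc j)
  then obtain W' z where "W = W' @ [z]" "W' \<in> nbw V E j" "z \<in> ext V E W'" by (auto simp: nbw_Suc)
  with Suc.IH show ?case by (auto simp: ext_def nbhd_def)
qed

lemma swap_nbhd: "(\<Sum>u\<in>V. \<Sum>v\<in>nbhd V E u. G u v) = (\<Sum>v\<in>V. \<Sum>u\<in>nbhd V E v. G u v)"
proof -
  have "(\<Sum>u\<in>V. \<Sum>v\<in>nbhd V E u. G u v) = (\<Sum>u\<in>V. \<Sum>v\<in>{v\<in>V. E u v}. G u v)"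
    by (simp add: nbhd_def)
  also have "\<dots> = (\<Sum>v\<in>V. \<Sum>u\<in>{u\<in>V. E u v}. G u v)" by (rule sum.swap_restrict[OF finV finV])
  also have "\<dots> = (\<Sum>v\<in>V. \<Sum>u\<in>nbhd V E v. G u v)"
    unfolding nbhd_def by (intro sum.cong refl) (auto intro: Esym)
  finally show ?thesis .
qed


lemma T_swap:
  "(\<Sum>u\<in>V. \<Sum>v\<in>nbhd V E u. \<Sum>z\<in>nbhd V E v - {u}. k v z)
   = (\<Sum>v\<in>V. \<Sum>z\<in>nbhd V E v. (real (deg V E v) - 1) * k v z)"
proof -
  have "(\<Sum>u\<in>V. \<Sum>v\<in>nbhd V E u. \<Sum>z\<in>nbhd V E v - {u}. k v z)
      = (\<Sum>v\<in>V. \<Sum>u\<in>nbhd V E v. \<Sum>z\<in>nbhd V E v - {u}. k v z)"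
    by (rule swap_nbhd)
  also have "\<dots> = (\<Sum>v\<in>V. \<Sum>z\<in>nbhd V E v. (real (deg V E v) - 1) * k v z)"
  proof (rule sum.cong[OF refl])
    fix v assume v: "v \<in> V"
    define N where "N = nbhd V E v"
    have finN: "finite N" using finV unfolding N_def nbhd_def by auto
    have "(\<Sum>u\<in>N. \<Sum>z\<in>N - {u}. k v z) = (\<Sum>u\<in>N. \<Sum>z\<in>{z\<in>N. u \<noteq> z}. k v z)"
      by (intro sum.cong refl) auto
    also have "\<dots> = (\<Sum>z\<in>N. \<Sum>u\<in>{u\<in>N. u \<noteq> z}. k v z)" by (rule sum.swap_restrict[OF finN finN])
    also have "\<dots> = (\<Sum>z\<in>N. (real (card N) - 1) * k v z)"
    proof (intro sum.cong refl)
      fix z assume z: "z \<in> N"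
      have "{u\<in>N. u \<noteq> z} = N - {z}" by auto
      moreover have "card (N - {z}) = card N - 1" using z finN by simp
      moreover have "card N \<ge> 1" using z finN by (metis card_0_eq empty_iff less_one not_le)
      ultimately show "(\<Sum>u\<in>{u\<in>N. u \<noteq> z}. k v z) = (real (card N) - 1) * k v z" by simp
    qed
    finally have "(\<Sum>u\<in>N. \<Sum>z\<in>N - {u}. k v z) = (\<Sum>z\<in>N. (real (card N) - 1) * k v z)" .
    thus "(\<Sum>u\<in>nbhd V E v. \<Sum>z\<in>nbhd V E v - {u}. k v z) = (\<Sum>z\<in>nbhd V E v. (real (deg V E v) - 1) * k v z)"
      by (simp add: N_def deg_def)
  qed
  finally show ?thesis .
qed

end

definition pw :: "'a set \<Rightarrow> ('a \<Rightarrow> 'a \<Rightarrow> bool) \<Rightarrow> 'a list \<Rightarrow> real" where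
  "pw V E W = prod_list (map (\<lambda>x. 1 / (real (deg V E x) - 1)) (butlast (tl W)))"

lemma pw_single[simp]: "pw V E [v] = 1" by (simp add: pw_def)
lemma pw_two[simp]: "pw V E [v, z] = 1" by (simp add: pw_def)

lemma pw_snoc:
  assumes "W \<noteq> []"
  shows "pw V E (W @ [z]) = pw V E W * (if 2 \<le> length W then 1 / (real (deg V E (last W)) - 1) else 1)"
proof (cases "2 \<le> length W")
  case True
  hence tne: "tl W \<noteq> []" by (cases W) auto
  have lt: "last (tl W) = last W" using tne by (simp add: last_tl)
  have "tl W = butlast (tl W) @ [last W]" using append_butlast_last_id[OF tne] lt by simp
  hence "pw V E (W @ [z]) = prod_list (map (\<lambda>x. 1 / (real (deg V E x) - 1)) (butlast (tl W) @ [last W]))"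
    using assms unfolding pw_def by (simp add: tl_append2)
  then show ?thesis using True by (simp add: pw_def)
next
  case False
  hence "length (tl W) = 0" by simp
  hence "tl W = []" by (metis length_0_conv)
  then show ?thesis using False assms by (simp add: pw_def tl_append2)
qed

definition aw :: "'a set \<Rightarrow> ('a \<Rightarrow> 'a \<Rightarrow> bool) \<Rightarrow> ('a \<Rightarrow> real) \<Rightarrow> 'a list \<Rightarrow> real" where
  "aw V E g W = (if length W = 1 then sqrt (g (hd W) * real (deg V E (hd W)))
                 else sqrt (g (last W) * pw V E W))"

context
  fixes V E w and g :: "'a \<Rightarrow> real"
  assumes G: "weighted_graph V E w" and D2: "\<forall>u\<in>V. deg V E u \<ge> 2" and gpos: "\<forall>u\<in>V. g u > 0"
begin

lemma pw_pos: "W \<in> nbw V E j \<Longrightarrow> pw V E W > 0"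
proof (induction j arbitrary: W)
  case 0 then show ?case by (auto simp: nbw_0)
next
  case (Suc j)
  then obtain W' z where W: "W = W' @ [z]" "W' \<in> nbw V E j" "z \<in> ext V E W'" by (auto simp: nbw_Suc[OF G])
  have p: "W' \<noteq> []" "last W' \<in> V" using nbw_props[OF G W(2)] by auto
  have "real (deg V E (last W')) \<ge> 2" using D2 p by auto
  then show ?case using Suc.IH[OF W(2)] W p by (simp add: pw_snoc)
qed

lemma key_K:
  "(\<Sum>W\<in>nbw V E (Suc j). pw V E W * h (last (butlast W)) (last W)) = (\<Sum>u\<in>V. \<Sum>v\<in>nbhd V E u. h u v)"
proof (induction j arbitrary: h)
  case 0
  show ?case by (simp add: sum_nbw_Suc[OF G] sum_nbw_0[OF G] ext_def)
next
  case (Suc j)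
  define h' where "h' u v = (\<Sum>z\<in>nbhd V E v - {u}. h v z / (real (deg V E v) - 1))" for u v
  have "(\<Sum>W\<in>nbw V E (Suc (Suc j)). pw V E W * h (last (butlast W)) (last W))
      = (\<Sum>W\<in>nbw V E (Suc j). \<Sum>z\<in>ext V E W. pw V E (W @ [z]) * h (last W) z)"
    by (simp add: sum_nbw_Suc[OF G])
  also have "\<dots> = (\<Sum>W\<in>nbw V E (Suc j). pw V E W * h' (last (butlast W)) (last W))"
  proof (intro sum.cong refl)
    fix W assume W: "W \<in> nbw V E (Suc j)"
    have p: "W \<noteq> []" "length W = Suc (Suc j)" using nbw_props[OF G W] by auto
    show "(\<Sum>z\<in>ext V E W. pw V E (W @ [z]) * h (last W) z) = pw V E W * h' (last (butlast W)) (last W)"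
      using p by (simp add: pw_snoc ext_def h'_def sum_distrib_left)
  qed
  also have "\<dots> = (\<Sum>u\<in>V. \<Sum>v\<in>nbhd V E u. h' u v)" by (rule Suc.IH)
  also have "\<dots> = (\<Sum>v\<in>V. \<Sum>z\<in>nbhd V E v. (real (deg V E v) - 1) * (h v z / (real (deg V E v) - 1)))"
    unfolding h'_def by (rule T_swap[OF G])
  also have "\<dots> = (\<Sum>v\<in>V. \<Sum>z\<in>nbhd V E v. h v z)"
  proof (intro sum.cong refl)
    fix v z assume "v \<in> V"
    hence "real (deg V E v) - 1 \<noteq> 0" using D2 by force
    thus "(real (deg V E v) - 1) * (h v z / (real (deg V E v) - 1)) = h v z" by simp
  qed
  finally show ?case .
qed

lemma sum_A: "(\<Sum>W\<in>nbw V E j. (aw V E g W)^2) = (\<Sum>u\<in>V. g u * real (deg V E u))"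
proof (cases j)
  case 0
  have "(\<Sum>W\<in>nbw V E j. (aw V E g W)^2) = (\<Sum>v\<in>V. (sqrt (g v * real (deg V E v)))^2)"
    using 0 by (simp add: sum_nbw_0[OF G] aw_def)
  also have "\<dots> = (\<Sum>u\<in>V. g u * real (deg V E u))"
    using gpos by (intro sum.cong refl) (simp add: less_imp_le)
  finally show ?thesis .
next
  case (Suc j')
  have "(\<Sum>W\<in>nbw V E j. (aw V E g W)^2) = (\<Sum>W\<in>nbw V E (Suc j'). pw V E W * (\<lambda>u v. g v) (last (butlast W)) (last W))"
  proof (unfold Suc, intro sum.cong refl)
    fix W assume W: "W \<in> nbw V E (Suc j')"
    have p: "W \<noteq> []" "length W = Suc (Suc j')" "last W \<in> V" using nbw_props[OF G W] by auto
    have "pw V E W > 0" by (rule pw_pos[OF W])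
    thus "(aw V E g W)^2 = pw V E W * (\<lambda>u v. g v) (last (butlast W)) (last W)"
      using p gpos by (simp add: aw_def less_imp_le)
  qed
  also have "\<dots> = (\<Sum>u\<in>V. \<Sum>v\<in>nbhd V E u. g v)" by (rule key_K)
  also have "\<dots> = (\<Sum>v\<in>V. \<Sum>u\<in>nbhd V E v. g v)" by (rule swap_nbhd[OF G])
  also have "\<dots> = (\<Sum>u\<in>V. g u * real (deg V E u))" by (simp add: deg_def mult.commute)
  finally show ?thesis .
qed


lemma sum_B:
  "(\<Sum>v1\<in>V. sqrt (real (deg V E v1) - 1) * (\<Sum>v2\<in>nbhd V E v1. w v1 v2 * sqrt (g v1 * g v2)))
   \<le> (\<Sum>W\<in>nbw V E j. \<Sum>z\<in>ext V E W. aw V E g W * w (last W) z * aw V E g (W @ [z]))"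
proof (cases j)
  case 0
  have "(\<Sum>v1\<in>V. sqrt (real (deg V E v1) - 1) * (\<Sum>v2\<in>nbhd V E v1. w v1 v2 * sqrt (g v1 * g v2)))
     = (\<Sum>v\<in>V. \<Sum>z\<in>nbhd V E v. sqrt (real (deg V E v) - 1) * (w v z * sqrt (g v * g z)))"
    by (simp add: sum_distrib_left)
  also have "\<dots> \<le> (\<Sum>v\<in>V. \<Sum>z\<in>nbhd V E v. sqrt (g v * real (deg V E v)) * w v z * sqrt (g z))"
  proof (intro sum_mono)
    fix v z assume v: "v \<in> V" and z: "z \<in> nbhd V E v"
    have E: "E v z" using z by (simp add: nbhd_def)
    have wp: "w v z > 0" using G E unfolding weighted_graph_def by blast
    have zV: "z \<in> V" using z by (simp add: nbhd_def)
    have gp: "g v > 0" "g z > 0" using gpos v zV by auto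
    have "sqrt (real (deg V E v) - 1) \<le> sqrt (real (deg V E v))" by simp
    hence "sqrt (real (deg V E v) - 1) * (w v z * sqrt (g v * g z)) \<le> sqrt (real (deg V E v)) * (w v z * sqrt (g v * g z))"
      using wp gp by (intro mult_right_mono) auto
    also have "\<dots> = sqrt (g v * real (deg V E v)) * w v z * sqrt (g z)"
      by (simp add: real_sqrt_mult mult_ac)
    finally show "sqrt (real (deg V E v) - 1) * (w v z * sqrt (g v * g z)) \<le> sqrt (g v * real (deg V E v)) * w v z * sqrt (g z)" .
  qed
  also have "\<dots> = (\<Sum>W\<in>nbw V E j. \<Sum>z\<in>ext V E W. aw V E g W * w (last W) z * aw V E g (W @ [z]))"
    using 0 by (simp add: sum_nbw_0[OF G] aw_def ext_def)
  finally show ?thesis .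
next
  case (Suc j')
  define k where "k v z = w v z * sqrt (g v * g z) / sqrt (real (deg V E v) - 1)" for v z
  define h' where "h' u v = (\<Sum>z\<in>nbhd V E v - {u}. k v z)" for u v
  have "(\<Sum>W\<in>nbw V E j. \<Sum>z\<in>ext V E W. aw V E g W * w (last W) z * aw V E g (W @ [z]))
      = (\<Sum>W\<in>nbw V E (Suc j'). pw V E W * h' (last (butlast W)) (last W))"
  proof (unfold Suc, rule sum.cong[OF refl])
    fix W assume W: "W \<in> nbw V E (Suc j')"
    have p: "W \<noteq> []" "length W = Suc (Suc j')" "last W \<in> V" using nbw_props[OF G W] by auto
    have pp: "pw V E W > 0" by (rule pw_pos[OF W])
    have dl: "real (deg V E (last W)) - 1 \<ge> 1" using D2 p(3) by force
    have "(\<Sum>z\<in>ext V E W. aw V E g W * w (last W) z * aw V E g (W @ [z]))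
        = (\<Sum>z\<in>ext V E W. pw V E W * k (last W) z)"
    proof (rule sum.cong[OF refl])
      fix z assume z: "z \<in> ext V E W"
      have zV: "z \<in> V" using z by (simp add: ext_def nbhd_def)
      define a where "a = g (last W)"
      define b where "b = g z"
      define p' where "p' = pw V E W"
      define c where "c = real (deg V E (last W)) - 1"
      have pos: "a > 0" "b > 0" "p' > 0" "c \<ge> 1" using gpos p(3) zV pp dl by (auto simp: a_def b_def p'_def c_def)
      have aW: "aw V E g W = sqrt (a * p')" using p by (simp add: aw_def a_def p'_def)
      have aWz: "aw V E g (W @ [z]) = sqrt (b * (p' * (1 / c)))"
        using p by (simp add: aw_def b_def p'_def c_def pw_snoc)
      have sq: "sqrt (a * p') * sqrt (b * (p' * (1 / c))) = p' * (sqrt (a * b) / sqrt c)"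
      proof -
        have "sqrt (a * p') * sqrt (b * (p' * (1 / c))) = (sqrt p' * sqrt p') * (sqrt (a * b) / sqrt c)"
          by (simp add: real_sqrt_mult real_sqrt_divide mult_ac)
        also have "sqrt p' * sqrt p' = p'" using pos by simp
        finally show ?thesis .
      qed
      show "aw V E g W * w (last W) z * aw V E g (W @ [z]) = pw V E W * k (last W) z"
        unfolding aW aWz k_def using sq by (simp add: a_def b_def c_def p'_def mult_ac)
    qed
    also have "\<dots> = pw V E W * h' (last (butlast W)) (last W)"
      using p by (simp add: h'_def ext_def sum_distrib_left)
    finally show "(\<Sum>z\<in>ext V E W. aw V E g W * w (last W) z * aw V E g (W @ [z]))
        = pw V E W * h' (last (butlast W)) (last W)" .
  qed
  also have "\<dots> = (\<Sum>u\<in>V. \<Sum>v\<in>nbhd V E u. h' u v)" by (rule key_K)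
  also have "\<dots> = (\<Sum>v\<in>V. \<Sum>z\<in>nbhd V E v. (real (deg V E v) - 1) * k v z)"
    unfolding h'_def by (rule T_swap[OF G])
  also have "\<dots> = (\<Sum>v1\<in>V. sqrt (real (deg V E v1) - 1) * (\<Sum>v2\<in>nbhd V E v1. w v1 v2 * sqrt (g v1 * g v2)))"
  proof (rule sum.cong[OF refl])
    fix v assume v: "v \<in> V"
    have c: "real (deg V E v) - 1 > 0" using D2 v by force
    have cd: "(real (deg V E v) - 1) / sqrt (real (deg V E v) - 1) = sqrt (real (deg V E v) - 1)"
      using c by (simp add: real_div_sqrt)
    have t: "(real (deg V E v) - 1) * (x / sqrt (real (deg V E v) - 1)) = sqrt (real (deg V E v) - 1) * x" for x
      by (metis cd times_divide_eq_left times_divide_eq_right)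
    have "(\<Sum>z\<in>nbhd V E v. (real (deg V E v) - 1) * k v z) = (\<Sum>z\<in>nbhd V E v. sqrt (real (deg V E v) - 1) * (w v z * sqrt (g v * g z)))"
      by (rule sum.cong[OF refl]) (simp only: k_def t)
    thus "(\<Sum>z\<in>nbhd V E v. (real (deg V E v) - 1) * k v z) = sqrt (real (deg V E v) - 1) * (\<Sum>v2\<in>nbhd V E v. w v v2 * sqrt (g v * g v2))"
      by (simp add: sum_distrib_left)
  qed
  finally show ?thesis by simp
qed

end

definition adj1 :: "('a \<Rightarrow> 'a \<Rightarrow> real) \<Rightarrow> 'a list \<Rightarrow> 'a list \<Rightarrow> real" where
  "adj1 w x y = (if \<exists>z. y = x @ [z] then w (last x) (last y) else 0)"

lemma unr_adj_split: "unr_adj w x y = adj1 w x y + adj1 w y x"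
  by (auto simp: unr_adj_def adj1_def)

lemma unr_adj_sym: "unr_adj w x y = unr_adj w y x"
  by (simp add: unr_adj_split)

lemma trig_sum:
  fixes \<theta> :: real
  defines "s \<equiv> (\<lambda>j::nat. sin (real (Suc j) * \<theta>))"
  shows "2 * cos \<theta> * (\<Sum>j\<le>m. (s j)^2) = 2 * (\<Sum>j<m. s j * s (Suc j)) + s m * s (Suc m)"
proof (induction m)
  case 0
  show ?case by (simp add: s_def sin_double power2_eq_square)
next
  case (Suc m)
  have id: "s (Suc (Suc m)) + s m = 2 * cos \<theta> * s (Suc m)"
  proof -
    have "s (Suc (Suc m)) = sin (real (Suc (Suc m)) * \<theta> + \<theta>)" by (simp add: s_def algebra_simps)
    moreover have "s m = sin (real (Suc (Suc m)) * \<theta> - \<theta>)" by (simp add: s_def algebra_simps)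
    ultimately show ?thesis by (simp add: s_def sin_add sin_diff)
  qed
  have "2 * cos \<theta> * (\<Sum>j\<le>Suc m. (s j)^2) = 2 * cos \<theta> * (\<Sum>j\<le>m. (s j)^2) + 2 * cos \<theta> * (s (Suc m))^2"
    by (simp add: algebra_simps)
  also have "\<dots> = 2 * (\<Sum>j<m. s j * s (Suc j)) + s m * s (Suc m) + s (Suc m) * (2 * cos \<theta> * s (Suc m))"
    using Suc by (simp add: power2_eq_square mult_ac)
  also have "\<dots> = 2 * (\<Sum>j<m. s j * s (Suc j)) + s m * s (Suc m) + s (Suc m) * (s (Suc (Suc m)) + s m)"
    by (simp add: id)
  also have "\<dots> = 2 * (\<Sum>j<Suc m. s j * s (Suc j)) + s (Suc m) * s (Suc (Suc m))"
    by (simp add: algebra_simps)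
  finally show ?case .
qed


context
  fixes V E w
  assumes G: "weighted_graph V E w"
begin

lemma T_mem: "x \<in> unr_verts E v r \<longleftrightarrow> nb_walk E x \<and> hd x = v \<and> length x \<le> Suc r"
  by (simp add: unr_verts_def)

lemma T_sub: "v \<in> V \<Longrightarrow> unr_verts E v r \<subseteq> (\<Union>j\<in>{..r}. nbw V E j)"
proof
  fix x assume v: "v \<in> V" and x: "x \<in> unr_verts E v r"
  hence x': "nb_walk E x" "hd x = v" "length x \<le> Suc r" by (auto simp: T_mem)
  hence "x \<noteq> []" by (simp add: nb_walk_def)
  hence "length x = Suc (length x - 1)" by (cases x) auto
  hence "x \<in> nbw V E (length x - 1)" using x' v by (simp add: nbw_def)
  moreover have "length x - 1 \<in> {..r}" using x' by auto
  ultimately show "x \<in> (\<Union>j\<in>{..r}. nbw V E j)" by blast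
qed

lemma finite_T: "v \<in> V \<Longrightarrow> finite (unr_verts E v r)"
  by (rule finite_subset[OF T_sub]) (auto simp: finite_nbw[OF G])

lemma single_T: "[v] \<in> unr_verts E v r" by (simp add: T_mem)

lemma sum_T: "(\<Sum>v\<in>V. \<Sum>x\<in>unr_verts E v r. F x) = (\<Sum>j\<le>r. \<Sum>x\<in>nbw V E j. F x)"
proof -
  have U: "(\<Union>v\<in>V. unr_verts E v r) = (\<Union>j\<in>{..r}. nbw V E j)"
  proof
    show "(\<Union>v\<in>V. unr_verts E v r) \<subseteq> (\<Union>j\<in>{..r}. nbw V E j)" using T_sub by blast
    show "(\<Union>j\<in>{..r}. nbw V E j) \<subseteq> (\<Union>v\<in>V. unr_verts E v r)"
    proof
      fix x assume "x \<in> (\<Union>j\<in>{..r}. nbw V E j)"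
      then obtain j where j: "j \<le> r" "x \<in> nbw V E j" by auto
      hence "x \<in> unr_verts E (hd x) r" "hd x \<in> V" by (auto simp: nbw_def T_mem)
      thus "x \<in> (\<Union>v\<in>V. unr_verts E v r)" by blast
    qed
  qed
  have "(\<Sum>v\<in>V. \<Sum>x\<in>unr_verts E v r. F x) = sum F (\<Union>v\<in>V. unr_verts E v r)"
    by (rule sum.UNION_disjoint[symmetric]) (auto simp: finV[OF G] finite_T T_mem)
  also have "\<dots> = sum F (\<Union>j\<in>{..r}. nbw V E j)" by (simp only: U)
  also have "\<dots> = (\<Sum>j\<le>r. \<Sum>x\<in>nbw V E j. F x)"
    apply (rule sum.UNION_disjoint)
      apply simp
     apply (simp add: finite_nbw[OF G])
    apply (auto simp: nbw_def)
    done
  finally show ?thesis .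
qed

lemma butlast_T:
  assumes y: "y \<in> unr_verts E v r"
  shows "butlast y \<in> unr_verts E v r \<longleftrightarrow> 2 \<le> length y"
proof
  assume "butlast y \<in> unr_verts E v r"
  hence "butlast y \<noteq> []" by (simp add: T_mem nb_walk_def)
  thus "2 \<le> length y" by (cases y rule: rev_cases) (auto simp: Suc_le_eq)
next
  assume l: "2 \<le> length y"
  have y': "nb_walk E y" "hd y = v" "length y \<le> Suc r" using y by (auto simp: T_mem)
  have bne: "butlast y \<noteq> []" using l by (cases y rule: rev_cases) auto
  have yeq: "y = butlast y @ [last y]" using l by (cases y rule: rev_cases) auto
  have "nb_walk E (butlast y)" using nb_walk_snoc[OF bne, of E "last y"] y'(1) yeq by simp
  moreover have "hd (butlast y) = v" using y'(2) bne yeq by (metis hd_append2)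
  ultimately show "butlast y \<in> unr_verts E v r" using y'(3) by (simp add: T_mem)
qed

lemma quad_T:
  assumes v: "v \<in> V"
  shows "(\<Sum>x\<in>unr_verts E v r. \<Sum>y\<in>unr_verts E v r. f x * unr_adj w x y * f y)
       = 2 * (\<Sum>y\<in>unr_verts E v r. if 2 \<le> length y then f (butlast y) * w (last (butlast y)) (last y) * f y else 0)"
proof -
  let ?T = "unr_verts E v r"
  let ?H = "\<lambda>y. if 2 \<le> length y then f (butlast y) * w (last (butlast y)) (last y) * f y else 0"
  have fin: "finite ?T" by (rule finite_T[OF v])
  have inner: "(\<Sum>x\<in>?T. f x * adj1 w x y * f y) = ?H y" if y: "y \<in> ?T" for y
  proof -
    have yne: "y \<noteq> []" using y by (simp add: T_mem nb_walk_def)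
    have "(\<Sum>x\<in>?T. f x * adj1 w x y * f y) = (\<Sum>x\<in>?T. if butlast y = x then f x * w (last x) (last y) * f y else 0)"
    proof (rule sum.cong[OF refl])
      fix x assume "x \<in> ?T"
      have "(\<exists>z. y = x @ [z]) \<longleftrightarrow> butlast y = x"
      proof
        assume "\<exists>z. y = x @ [z]" thus "butlast y = x" by auto
      next
        assume "butlast y = x" thus "\<exists>z. y = x @ [z]" using yne by (metis append_butlast_last_id)
      qed
      thus "f x * adj1 w x y * f y = (if butlast y = x then f x * w (last x) (last y) * f y else 0)"
        by (simp add: adj1_def)
    qed
    also have "\<dots> = (if butlast y \<in> ?T then f (butlast y) * w (last (butlast y)) (last y) * f y else 0)"
      using fin by simp
    also have "\<dots> = ?H y" using butlast_T[OF y] by simp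
    finally show ?thesis .
  qed
  have s1: "(\<Sum>x\<in>?T. \<Sum>y\<in>?T. f x * adj1 w x y * f y) = (\<Sum>y\<in>?T. ?H y)"
  proof -
    have "(\<Sum>x\<in>?T. \<Sum>y\<in>?T. f x * adj1 w x y * f y) = (\<Sum>y\<in>?T. \<Sum>x\<in>?T. f x * adj1 w x y * f y)"
      by (rule sum.swap)
    also have "\<dots> = (\<Sum>y\<in>?T. ?H y)" using inner by (intro sum.cong refl) auto
    finally show ?thesis .
  qed
  have s2: "(\<Sum>x\<in>?T. \<Sum>y\<in>?T. f y * adj1 w y x * f x) = (\<Sum>x\<in>?T. ?H x)"
    using inner by (intro sum.cong refl) auto
  have "(\<Sum>x\<in>?T. \<Sum>y\<in>?T. f x * unr_adj w x y * f y)
      = (\<Sum>x\<in>?T. \<Sum>y\<in>?T. f x * adj1 w x y * f y) + (\<Sum>x\<in>?T. \<Sum>y\<in>?T. f y * adj1 w y x * f x)"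
    by (simp add: unr_adj_split algebra_simps sum.distrib)
  also have "\<dots> = 2 * (\<Sum>y\<in>?T. ?H y)" unfolding s1 s2 by simp
  finally show ?thesis .
qed

end



theorem theorem1p5:
  fixes V :: "'a set" and E :: "'a \<Rightarrow> 'a \<Rightarrow> bool" and w :: "'a \<Rightarrow> 'a \<Rightarrow> real"
    and g :: "'a \<Rightarrow> real" and r :: nat
  assumes "weighted_graph V E w"
    and "connected_graph V E"
    and "\<forall>u\<in>V. deg V E u \<ge> 2"
    and "r \<ge> 1"
    and "\<forall>u\<in>V. g u > 0"
  shows "\<exists>v\<in>V. lambda1_unr E w v r \<ge>
           2 * (\<Sum>v1\<in>V. sqrt (real (deg V E v1) - 1) *
                   (\<Sum>v2\<in>nbhd V E v1. w v1 v2 * sqrt (g v1 * g v2)))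
             / (\<Sum>u\<in>V. g u * real (deg V E u)) * cos (pi / real (r + 2))"
proof (rule ccontr)
  note G = assms(1)
  have D2: "\<forall>u\<in>V. deg V E u \<ge> 2" by fact
  have gpos: "\<forall>u\<in>V. g u > 0" by fact
  define \<theta> where "\<theta> = pi / real (r + 2)"
  define s where "s j = sin (real (Suc j) * \<theta>)" for j
  define D where "D = (\<Sum>u\<in>V. g u * real (deg V E u))"
  define N where "N = (\<Sum>v1\<in>V. sqrt (real (deg V E v1) - 1) * (\<Sum>v2\<in>nbhd V E v1. w v1 v2 * sqrt (g v1 * g v2)))"
  define c where "c = 2 * N / D * cos \<theta>"
  define F where "F x = s (length x - 1) * aw V E g x" for x
  define T where "T v = unr_verts E v r" for v
  define A where "A = unr_adj w"
  define H where "H y = (if 2 \<le> length y then F (butlast y) * w (last (butlast y)) (last y) * F y else 0)" for y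
  define B where "B j = (\<Sum>W\<in>nbw V E j. \<Sum>z\<in>ext V E W. aw V E g W * w (last W) z * aw V E g (W @ [z]))" for j
  assume "\<not> (\<exists>v\<in>V. lambda1_unr E w v r \<ge> 2 * (\<Sum>v1\<in>V. sqrt (real (deg V E v1) - 1) *
                   (\<Sum>v2\<in>nbhd V E v1. w v1 v2 * sqrt (g v1 * g v2)))
             / (\<Sum>u\<in>V. g u * real (deg V E u)) * cos (pi / real (r + 2)))"
  hence neg: "\<forall>v\<in>V. lambda1_unr E w v r < c"
    unfolding c_def N_def D_def \<theta>_def by auto
  have finV: "finite V" using G by (simp add: weighted_graph_def)
  have Vne: "V \<noteq> {}" using assms(2) by (simp add: connected_graph_def)
  have spos: "s k > 0" if k: "k \<le> r" for k
  proof -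
    have pp: "pi / real (r + 2) > 0" by simp
    have eq: "real (Suc k) * \<theta> = pi * (real (Suc k) / real (r + 2))" by (simp add: \<theta>_def)
    have "real (Suc k) / real (r + 2) < 1" using k by simp
    hence "pi * (real (Suc k) / real (r + 2)) < pi * 1" by (intro mult_strict_left_mono) auto
    moreover have "0 < real (Suc k) * \<theta>" using pp by (simp add: \<theta>_def)
    ultimately show ?thesis unfolding s_def using eq by (intro sin_gt_zero) auto
  qed
  have sr: "s (Suc r) = 0"
  proof -
    have "real (Suc (Suc r)) * \<theta> = pi" by (simp add: \<theta>_def)
    thus ?thesis by (simp add: s_def)
  qed
  have Dpos: "D > 0" unfolding D_def
    using gpos D2 by (intro sum_pos finV Vne) force
  have Fsingle: "F [v] > 0" if v: "v \<in> V" for v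
  proof -
    have "g v * real (deg V E v) > 0" using gpos D2 v by force
    thus ?thesis using spos[of 0] by (simp add: F_def aw_def)
  qed
  have ipF: "ip (T v) F F > 0" if v: "v \<in> V" for v
  proof -
    have "F [v] * F [v] \<le> (\<Sum>x\<in>T v. F x * F x)"
      by (rule member_le_sum[of "[v]" "T v" "\<lambda>x. F x * F x"]) (auto simp: T_def single_T[OF G] finite_T[OF G v])
    moreover have "F [v] * F [v] > 0" using Fsingle[OF v] by simp
    ultimately show ?thesis by (simp add: ip_def)
  qed
  have ray: "ip (T v) F (mv (T v) A F) < c * ip (T v) F F" if v: "v \<in> V" for v
  proof -
    have "ip (T v) F (mv (T v) A F) / ip (T v) F F \<le> spec_radius (T v) A"
      by (rule rayleigh) (auto simp: T_def A_def finite_T[OF G v] ipF[OF v, unfolded T_def] intro: unr_adj_sym)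
    also have "\<dots> < c" using neg v by (simp add: lambda1_unr_def T_def A_def)
    finally show ?thesis using ipF[OF v] by (simp add: pos_divide_less_eq)
  qed
  have lt: "(\<Sum>v\<in>V. ip (T v) F (mv (T v) A F)) < (\<Sum>v\<in>V. c * ip (T v) F F)"
    using ray by (intro sum_strict_mono finV Vne) auto
  have Q: "ip (T v) F (mv (T v) A F) = 2 * (\<Sum>y\<in>T v. H y)" if v: "v \<in> V" for v
  proof -
    have "ip (T v) F (mv (T v) A F) = (\<Sum>x\<in>T v. \<Sum>y\<in>T v. F x * unr_adj w x y * F y)"
      by (simp add: ip_def mv_def A_def sum_distrib_left mult.assoc)
    also have "\<dots> = 2 * (\<Sum>y\<in>T v. H y)" unfolding T_def H_def by (rule quad_T[OF G v])
    finally show ?thesis .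
  qed
  have HS: "(\<Sum>y\<in>nbw V E (Suc j). H y) = s j * s (Suc j) * B j" for j
  proof -
    have "(\<Sum>y\<in>nbw V E (Suc j). H y) = (\<Sum>W\<in>nbw V E j. \<Sum>z\<in>ext V E W. H (W @ [z]))"
      by (rule sum_nbw_Suc[OF G])
    also have "\<dots> = (\<Sum>W\<in>nbw V E j. \<Sum>z\<in>ext V E W. s j * s (Suc j) * (aw V E g W * w (last W) z * aw V E g (W @ [z])))"
    proof (rule sum.cong[OF refl], rule sum.cong[OF refl])
      fix W z assume W: "W \<in> nbw V E j"
      have p: "W \<noteq> []" "length W = Suc j" using nbw_props[OF G W] by auto
      show "H (W @ [z]) = s j * s (Suc j) * (aw V E g W * w (last W) z * aw V E g (W @ [z]))"
        using p by (simp add: H_def F_def mult_ac Suc_le_eq)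
    qed
    also have "\<dots> = s j * s (Suc j) * B j" by (simp add: B_def sum_distrib_left)
    finally show ?thesis .
  qed
  have H0: "(\<Sum>y\<in>nbw V E 0. H y) = 0"
    by (simp add: sum_nbw_0[OF G] H_def)
  obtain r' where r': "r = Suc r'" using assms(4) by (cases r) auto
  have "(\<Sum>v\<in>V. ip (T v) F (mv (T v) A F)) = 2 * (\<Sum>v\<in>V. \<Sum>y\<in>T v. H y)"
    using Q by (simp add: sum_distrib_left)
  also have "(\<Sum>v\<in>V. \<Sum>y\<in>T v. H y) = (\<Sum>j\<le>r. \<Sum>y\<in>nbw V E j. H y)"
    unfolding T_def by (rule sum_T[OF G])
  also have "\<dots> = (\<Sum>j<r. s j * s (Suc j) * B j)"
    unfolding r' sum.atMost_Suc_shift H0 HS by (simp add: lessThan_Suc_atMost)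
  finally have LHS: "(\<Sum>v\<in>V. ip (T v) F (mv (T v) A F)) = 2 * (\<Sum>j<r. s j * s (Suc j) * B j)" .
  have LHSge: "2 * (\<Sum>j<r. s j * s (Suc j) * N) \<le> 2 * (\<Sum>j<r. s j * s (Suc j) * B j)"
  proof -
    have "(\<Sum>j<r. s j * s (Suc j) * N) \<le> (\<Sum>j<r. s j * s (Suc j) * B j)"
    proof (rule sum_mono)
      fix j assume j: "j \<in> {..<r}"
      have "s j * s (Suc j) \<ge> 0" using spos[of j] spos[of "Suc j"] j by auto
      moreover have "N \<le> B j" unfolding N_def B_def by (rule sum_B[OF G D2 gpos])
      ultimately show "s j * s (Suc j) * N \<le> s j * s (Suc j) * B j" by (simp add: mult_left_mono)
    qed
    thus ?thesis by simp
  qed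
  have RHS: "(\<Sum>v\<in>V. c * ip (T v) F F) = c * ((\<Sum>j\<le>r. (s j)^2) * D)"
  proof -
    have "(\<Sum>v\<in>V. c * ip (T v) F F) = c * (\<Sum>v\<in>V. \<Sum>x\<in>T v. F x * F x)"
      by (simp add: ip_def sum_distrib_left)
    also have "(\<Sum>v\<in>V. \<Sum>x\<in>T v. F x * F x) = (\<Sum>j\<le>r. \<Sum>x\<in>nbw V E j. F x * F x)"
      unfolding T_def by (rule sum_T[OF G])
    also have "\<dots> = (\<Sum>j\<le>r. (s j)^2 * D)"
    proof (rule sum.cong[OF refl])
      fix j
      have "(\<Sum>x\<in>nbw V E j. F x * F x) = (\<Sum>x\<in>nbw V E j. (s j)^2 * (aw V E g x)^2)"
      proof (rule sum.cong[OF refl])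
        fix x assume x: "x \<in> nbw V E j"
        have "length x = Suc j" using nbw_props[OF G x] by auto
        thus "F x * F x = (s j)^2 * (aw V E g x)^2" by (simp add: F_def power2_eq_square mult_ac)
      qed
      also have "\<dots> = (s j)^2 * D" unfolding D_def
        by (simp add: sum_distrib_left[symmetric] sum_A[OF G D2 gpos])
      finally show "(\<Sum>x\<in>nbw V E j. F x * F x) = (s j)^2 * D" .
    qed
    also have "\<dots> = (\<Sum>j\<le>r. (s j)^2) * D" by (simp add: sum_distrib_right)
    finally show ?thesis .
  qed
  have trig: "2 * cos \<theta> * (\<Sum>j\<le>r. (s j)^2) = 2 * (\<Sum>j<r. s j * s (Suc j)) + s r * s (Suc r)"
    unfolding s_def by (rule trig_sum)
  have "c * ((\<Sum>j\<le>r. (s j)^2) * D) = N * (2 * cos \<theta> * (\<Sum>j\<le>r. (s j)^2))"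
    using Dpos by (simp add: c_def field_simps)
  also have "\<dots> = 2 * (\<Sum>j<r. s j * s (Suc j) * N)"
    unfolding trig sr by (simp add: sum_distrib_left sum_distrib_right mult_ac)
  finally have "c * ((\<Sum>j\<le>r. (s j)^2) * D) = 2 * (\<Sum>j<r. s j * s (Suc j) * N)" .
  with lt LHS LHSge RHS show False by linarith
qed


end
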